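(* Let $p,w,v$ be positive integers with $1\le v\le w$, let $\mathbf{A}$ be a $p\times p$ matrix and $\mathbf{B}$ a $w\times p$ matrix over $\mathbb{F}_2$, and let $\mathbf{x}_0\in\mathbb{F}_2^p$ be a nonzero initial state. Define $\mathbf{x}_i=\mathbf{A}\mathbf{x}_{i-1}$ and $\mathbf{y}_i=\mathbf{B}\mathbf{x}_i={}^t(y_{i,0},\dots,y_{i,w-1})$ for $i\ge 0$. Assume the characteristic polynomial $P(z)=\det(\mathbf{I}z-\mathbf{A})$ is irreducible over $\mathbb{F}_2$ (e.g. primitive), and that $h_0(z)\neq 0$ (notation as in the context). Let $k\ge 1$ and $w_{j,l-1}\in\mathbb{F}_2$ for $0\le j\le k-1$, $1\le l\le v$, and put $w_{l-1}(z):=\sum_{j=0}^{k-1}w_{j,l-1}z^j\in\mathbb{F}_2[z]$. Then $$\sum_{l=1}^{v}\sum_{j=0}^{k-1} w_{j,l-1}\,y_{i+j,l-1}=0\quad\text{for all } i\ge 0$$ holds if and only if ${}^t(w_0(z),\dots,w_{v-1}(z))\in\mathcal{L}_v^*$.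
   Context: For $1\le l\le w$ define the formal power series $G_{l-1}(z):=\sum_{i=0}^\infty y_{i,l-1}z^{-i-1}\in\mathbb{F}_2((z^{-1}))$. Each has the rational form $G_{l-1}(z)=h_{l-1}(z)/P(z)$ with $h_{l-1}(z)\in\mathbb{F}_2[z]$, $\deg h_{l-1}<\deg P$. Assuming $P$ irreducible and $h_0\neq 0$, let $h_0^{-1}(z)$ denote a polynomial inverse of $h_0(z)$ modulo $P(z)$ and set $\bar h_{l-1}(z):=h_0^{-1}(z)h_{l-1}(z)\bmod P(z)$ for $2\le l\le v$. The Couture–L'Ecuyer dual lattice is the $\mathbb{F}_2[z]$-submodule $\mathcal{L}_v^*\subset\mathbb{F}_2[z]^v$ spanned over $\mathbb{F}_2[z]$ by $\mathbf{w}_1(z)={}^t(P(z),0,\dots,0)$ and $\mathbf{w}_{l}(z)={}^t(-\bar h_{l-1}(z),0,\dots,0,1,0,\dots,0)$ for $2\le l\le v$, where the entry $1$ is in coordinate $l$ (signs are irrelevant over $\mathbb{F}_2$). *)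

theory Defs
  imports "HOL-Library.Z2" "HOL-Computational_Algebra.Polynomial" "Jordan_Normal_Form.Char_Poly"
begin

definition out_seq :: "bit mat \<Rightarrow> bit mat \<Rightarrow> bit vec \<Rightarrow> nat \<Rightarrow> nat \<Rightarrow> bit" where
  "out_seq A B x0 i j = (B *\<^sub>v ((A ^\<^sub>m i) *\<^sub>v x0)) $ j"

text \<open>h_j: the polynomial numerator of G_j(z) = sum_i y_{i,j} z^(-i-1) = h_j(z)/P(z),
  i.e. the polynomial part of P(z) G_j(z): coefficient of z^n is
  sum over d from n+1 to deg P of coeff P d * y_{d-n-1,j}.\<close>

definition h_poly :: "bit poly \<Rightarrow> (nat \<Rightarrow> nat \<Rightarrow> bit) \<Rightarrow> nat \<Rightarrow> bit poly" where
  "h_poly P y j = (\<Sum>n<degree P. monom (\<Sum>d\<in>{n+1..degree P}. coeff P d * y (d - n - 1) j) n)"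

definition inv_mod :: "bit poly \<Rightarrow> bit poly \<Rightarrow> bit poly" where
  "inv_mod P h = (SOME q. (h * q) mod P = 1)"

definition hbar :: "bit poly \<Rightarrow> (nat \<Rightarrow> nat \<Rightarrow> bit) \<Rightarrow> nat \<Rightarrow> bit poly" where
  "hbar P y j = (inv_mod P (h_poly P y 0) * h_poly P y j) mod P"

text \<open>Generators of the dual lattice, vectors indexed by coordinates 0..v-1
  (paper coordinate l is index l-1). gen l for 1 \<le> l \<le> v.\<close>
definition dual_gen :: "bit poly \<Rightarrow> (nat \<Rightarrow> nat \<Rightarrow> bit) \<Rightarrow> nat \<Rightarrow> nat \<Rightarrow> bit poly" where
  "dual_gen P y l idx =
     (if l = 1 then (if idx = 0 then P else 0)
      else (if idx = 0 then - hbar P y (l - 1) else if idx = l - 1 then 1 else 0))"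

definition in_dual_lattice :: "bit poly \<Rightarrow> (nat \<Rightarrow> nat \<Rightarrow> bit) \<Rightarrow> nat \<Rightarrow> (nat \<Rightarrow> bit poly) \<Rightarrow> bool" where
  "in_dual_lattice P y v ws \<longleftrightarrow>
     (\<exists>c :: nat \<Rightarrow> bit poly. \<forall>idx<v. ws idx = (\<Sum>l=1..v. c l * dual_gen P y l idx))"

end

theory Submission
  imports Defs
begin

definition hh :: "'a::field poly \<Rightarrow> (nat \<Rightarrow> 'a) \<Rightarrow> 'a poly" where
  "hh P s = (\<Sum>n<degree P. monom (\<Sum>d\<in>{n+1..degree P}. coeff P d * s (d - n - 1)) n)"

definition recP :: "'a::field poly \<Rightarrow> (nat \<Rightarrow> 'a) \<Rightarrow> bool" where
  "recP P s \<longleftrightarrow> (\<forall>i. (\<Sum>d\<le>degree P. coeff P d * s (i+d)) = 0)"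

lemma coeff_hh: "coeff (hh P s) m = (if m < degree P then (\<Sum>d\<in>{m+1..degree P}. coeff P d * s (d - m - 1)) else 0)"
  unfolding hh_def by (simp add: coeff_sum)

lemma degree_hh: "degree P > 0 \<Longrightarrow> degree (hh P s) < degree P"
proof -
  assume "degree P > 0"
  have "degree (hh P s) \<le> degree P - 1"
    by (rule degree_le) (auto simp: coeff_hh)
  then show ?thesis using \<open>degree P > 0\<close> by linarith
qed

lemma hh_add: "hh P (\<lambda>i. f i + g i) = hh P f + hh P g"
  by (rule poly_eqI) (simp add: coeff_hh ring_distribs sum.distrib)

lemma hh_smult: "hh P (\<lambda>i. a * f i) = Polynomial.smult a (hh P f)"
  by (rule poly_eqI) (simp add: coeff_hh sum_distrib_left mult.left_commute)

lemma hh_zero: "hh P (\<lambda>i. 0) = 0"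
  by (rule poly_eqI) (simp add: coeff_hh)

lemma hh_sum: "hh P (\<lambda>i. \<Sum>x\<in>X. f x i) = (\<Sum>x\<in>X. hh P (f x))"
  by (rule poly_eqI) (auto simp add: coeff_hh coeff_sum sum_distrib_left intro: sum.swap)

lemma recP_shift: "recP P s \<Longrightarrow> recP P (\<lambda>i. s (i + K))"
  unfolding recP_def by (metis (no_types, lifting) add.assoc add.commute sum.cong)

lemma hh_shift:
  assumes r: "recP P s" and dP: "degree P > 0"
  shows "hh P (\<lambda>i. s (Suc i)) + Polynomial.smult (s 0) P = pCons 0 (hh P s)"
proof (rule poly_eqI)
  fix m
  show "coeff (hh P (\<lambda>i. s (Suc i)) + Polynomial.smult (s 0) P) m = coeff (pCons 0 (hh P s)) m"
  proof (cases m)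
    case 0
    have "(\<Sum>d\<le>degree P. coeff P d * s (0+d)) = 0" using r unfolding recP_def by blast
    moreover have "(\<Sum>d\<le>degree P. coeff P d * s (0+d)) = coeff P 0 * s 0 + (\<Sum>d\<in>{1..degree P}. coeff P d * s d)"
      by (simp add: atMost_atLeast0 sum.atLeast_Suc_atMost)
    moreover have "(\<Sum>d\<in>{1..degree P}. coeff P d * s (Suc (d - 0 - 1))) = (\<Sum>d\<in>{1..degree P}. coeff P d * s d)"
      by (rule sum.cong) auto
    ultimately show ?thesis using 0 dP by (simp add: coeff_hh mult.commute, simp add: add.commute)
  next
    case (Suc m')
    show ?thesis
    proof (cases "m < degree P")
      case True
      have "(\<Sum>d\<in>{m'+1..degree P}. coeff P d * s (d - m' - 1)) = coeff P m * s 0 + (\<Sum>d\<in>{m+1..degree P}. coeff P d * s (d - m' - 1))"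
        using True Suc by (simp add: sum.atLeast_Suc_atMost)
      moreover have "(\<Sum>d\<in>{m+1..degree P}. coeff P d * s (Suc (d - m - 1))) = (\<Sum>d\<in>{m+1..degree P}. coeff P d * s (d - m' - 1))"
        by (rule sum.cong[OF refl]) (auto simp: Suc Suc_diff_Suc)
      ultimately show ?thesis using True Suc by (simp add: coeff_hh mult.commute)
    next
      case False
      show ?thesis
      proof (cases "m = degree P")
        case True
        have "coeff (pCons 0 (hh P s)) m = coeff (hh P s) m'" using Suc by simp
        also have "\<dots> = coeff P (degree P) * s 0" using True Suc by (simp add: coeff_hh)
        finally show ?thesis using True by (simp add: coeff_hh mult.commute)
      next
        case False
        then show ?thesis using \<open>\<not> m < degree P\<close> Suc by (simp add: coeff_hh coeff_eq_0)
      qed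
    qed
  qed
qed

lemma aux_shiftK: "H = x * a - c \<Longrightarrow> H - x^Suc K * h = x*(a - x^K*h) - (c::'a::comm_ring_1)"
  by (simp add: algebra_simps)

lemma hh_shiftK:
  assumes r: "recP P s" and dP: "degree P > 0"
  shows "P dvd (hh P (\<lambda>i. s (i + K)) - [:0,1:]^K * hh P s)"
proof (induction K)
  case 0
  then show ?case by simp
next
  case (Suc K)
  have rK: "recP P (\<lambda>i. s (i + K))" by (rule recP_shift[OF r])
  have e0: "hh P (\<lambda>i. s (Suc i + K)) + Polynomial.smult (s (0 + K)) P = pCons 0 (hh P (\<lambda>i. s (i + K)))"
    using hh_shift[OF rK dP] .
  have e: "hh P (\<lambda>i. s (i + Suc K)) = [:0,1:] * hh P (\<lambda>i. s (i + K)) - Polynomial.smult (s K) P"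
  proof -
    have f: "(\<lambda>i. s (Suc i + K)) = (\<lambda>i. s (i + Suc K))" by simp
    have "hh P (\<lambda>i. s (Suc i + K)) = pCons 0 (hh P (\<lambda>i. s (i + K))) - Polynomial.smult (s (0 + K)) P"
      by (rule eq_diff_eq[THEN iffD2, OF e0])
    then show ?thesis unfolding f pCons_0_as_mult[of "hh P (\<lambda>i. s (i + K))"] by simp
  qed
  have "hh P (\<lambda>i. s (i + Suc K)) - [:0,1:]^Suc K * hh P s
      = [:0,1:] * (hh P (\<lambda>i. s (i + K)) - [:0,1:]^K * hh P s) - Polynomial.smult (s K) P"
    by (rule aux_shiftK[OF e])
  moreover have "P dvd [:0,1:] * (hh P (\<lambda>i. s (i + K)) - [:0,1:]^K * hh P s) - Polynomial.smult (s K) P"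
    by (rule dvd_diff[OF dvd_mult[OF Suc.IH] dvd_smult[OF dvd_refl]])
  ultimately show ?case by simp
qed



lemma aux_combo1: "x^i * (S + Polynomial.smult c (x^k)) * h = x^i*S*h + Polynomial.smult c (x^(i+k)*(h::'a::comm_ring_1 poly))"
  by (simp add: algebra_simps power_add)

lemma aux_combo2: "(A + Polynomial.smult c B) - (C + Polynomial.smult c D) = (A - C) + Polynomial.smult c (B - (D::'a::comm_ring_1 poly))"
  by (simp add: algebra_simps smult_diff_right)

lemma hh_combo:
  assumes r: "recP P s" and dP: "degree P > 0"
  shows "P dvd (hh P (\<lambda>n. \<Sum>j<k. c j * s (n + i + j)) - [:0,1:]^i * (\<Sum>j<k. monom (c j) j) * hh P s)"
proof (induction k)
  case 0
  then show ?case by (simp add: hh_zero)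
next
  case (Suc k)
  have a: "hh P (\<lambda>n. \<Sum>j<Suc k. c j * s (n + i + j)) = hh P (\<lambda>n. \<Sum>j<k. c j * s (n + i + j)) + Polynomial.smult (c k) (hh P (\<lambda>n. s (n + (i + k))))"
    unfolding sum.lessThan_Suc hh_add hh_smult by (simp add: add.assoc)
  have b: "[:0,1:]^i * (\<Sum>j<Suc k. monom (c j) j) * hh P s = [:0,1:]^i * (\<Sum>j<k. monom (c j) j) * hh P s + Polynomial.smult (c k) ([:0,1:]^(i+k) * hh P s)"
    unfolding sum.lessThan_Suc monom_altdef[of "c k"] by (rule aux_combo1)
  show ?case unfolding a b aux_combo2
    by (rule dvd_add[OF Suc.IH dvd_smult[OF hh_shiftK[OF r dP]]])
qed


lemma dvd_small_zero:
  fixes q :: "'a::field poly"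
  assumes "P dvd q" "degree q < degree P" shows "q = 0"
proof (rule ccontr)
  assume "q \<noteq> 0"
  then have "degree P \<le> degree q" by (rule dvd_imp_degree_le[OF assms(1)])
  with assms(2) show False by simp
qed

lemma pow_mat_Suc':
  assumes A: "A \<in> carrier_mat n n"
  shows "A ^\<^sub>m Suc k = A * A ^\<^sub>m k"
proof (induction k)
  case 0
  then show ?case using A by simp
next
  case (Suc k)
  have "A ^\<^sub>m Suc (Suc k) = (A * A ^\<^sub>m k) * A" using Suc by simp
  also have "\<dots> = A * (A ^\<^sub>m k * A)" using A by (simp add: assoc_mult_mat[of _ n n _ n _ n])
  finally show ?case by simp
qed

lemma char_poly_matrix_index:
  assumes A: "A \<in> carrier_mat n n" and "l < n" "j < n"
  shows "char_poly_matrix A $$ (l,j) = (if l = j then [:0,1:] else 0) + [: - A $$ (l,j) :]"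
  using assms unfolding char_poly_matrix_def by auto

lemma cayley_hamilton_vec:
  fixes A :: "'a::field mat"
  assumes A: "A \<in> carrier_mat n n" and u: "u \<in> carrier_vec n" and i: "i < n"
  shows "(\<Sum>d\<le>degree (char_poly A). coeff (char_poly A) d * ((A ^\<^sub>m d) *\<^sub>v u) $ i) = 0"
proof -
  define M where "M = char_poly_matrix A"
  define N where "N = adj_mat M"
  define P where "P = char_poly A"
  have M: "M \<in> carrier_mat n n" using A by (simp add: M_def)
  have N: "N \<in> carrier_mat n n" using adj_mat(1)[OF M] by (simp add: N_def)
  have NM: "N * M = P \<cdot>\<^sub>m 1\<^sub>m n" using adj_mat(3)[OF M] by (simp add: N_def P_def M_def char_poly_def)
  define c where "c k a b = coeff (N $$ (a,b)) k" for k a b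
  have E: "(if k = 0 then 0 else c (k-1) a b) - (\<Sum>l<n. c k a l * A $$ (l,b)) = (if a = b then coeff P k else 0)"
    if ab: "a < n" "b < n" for k a b
  proof -
    have "(N * M) $$ (a,b) = (\<Sum>l<n. N $$ (a,l) * M $$ (l,b))"
      using ab N M by (simp add: scalar_prod_def lessThan_atLeast0)
    also have "\<dots> = (\<Sum>l<n. N $$ (a,l) * ((if l = b then [:0,1:] else 0) + [: - A $$ (l,b) :]))"
      using ab A by (intro sum.cong) (simp_all add: M_def char_poly_matrix_index)
    also have "\<dots> = (\<Sum>l<n. (if l = b then N $$ (a,l) * [:0,1:] else 0)) + (\<Sum>l<n. N $$ (a,l) * [: - A $$ (l,b) :])"
      unfolding distrib_left sum.distrib by (intro arg_cong2[where f="(+)"] sum.cong refl) simp_all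
    also have "(\<Sum>l<n. (if l = b then N $$ (a,l) * [:0,1:] else 0)) = N $$ (a,b) * [:0,1:]"
      using ab by (simp add: sum.delta')
    finally have eq: "(N * M) $$ (a,b) = N $$ (a,b) * [:0,1:] + (\<Sum>l<n. N $$ (a,l) * [: - A $$ (l,b) :])" .
    have c1: "coeff ((N * M) $$ (a,b)) k = (if a = b then coeff P k else 0)"
      using ab by (simp add: NM)
    have c2: "coeff (N $$ (a,b) * [:0,1:]) k = (if k = 0 then 0 else c (k-1) a b)"
      unfolding mult.commute[of _ "[:0,1:]"] pCons_0_as_mult[symmetric]
      by (cases k) (simp_all add: c_def)
    have c3: "coeff (\<Sum>l<n. N $$ (a,l) * [: - A $$ (l,b) :]) k = - (\<Sum>l<n. c k a l * A $$ (l,b))"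
      by (simp add: coeff_sum c_def sum_negf[symmetric] mult.commute[of _ "[:_:]"] mult.commute[of "A $$ _"])
    show ?thesis using eq c1 c2 c3 by simp
  qed
  define w where "w k = (A ^\<^sub>m k) *\<^sub>v u" for k
  have wdim: "w k \<in> carrier_vec n" for k using A u unfolding w_def by (intro mult_mat_vec_carrier[of _ n n]) auto
  have wSuc: "w (Suc k) $ j = (\<Sum>l<n. A $$ (j,l) * w k $ l)" if "j < n" for k j
  proof -
    have "w (Suc k) = A *\<^sub>v w k"
      unfolding w_def pow_mat_Suc'[OF A] using A u by (simp add: assoc_mult_mat_vec[of _ n n _ n])
    then show ?thesis using that A wdim[of k] by (simp add: scalar_prod_def lessThan_atLeast0)
  qed
  define G where "G k a = (\<Sum>l<n. c k a l * w (Suc k) $ l)" for k a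
  have step: "(if k = 0 then 0 else G (k-1) a) - G k a = coeff P k * w k $ a" if a: "a < n" for k a
  proof -
    have "(\<Sum>b<n. ((if k = 0 then 0 else c (k-1) a b) - (\<Sum>l<n. c k a l * A $$ (l,b))) * w k $ b)
        = (\<Sum>b<n. (if a = b then coeff P k else 0) * w k $ b)"
      using E a by (intro sum.cong) auto
    also have "\<dots> = (\<Sum>b<n. (if a = b then coeff P k * w k $ b else 0))" by (intro sum.cong) auto
    also have "\<dots> = coeff P k * w k $ a" using a by (simp add: sum.delta)
    finally have h: "(\<Sum>b<n. ((if k = 0 then 0 else c (k-1) a b) - (\<Sum>l<n. c k a l * A $$ (l,b))) * w k $ b) = coeff P k * w k $ a" .
    have h1: "(\<Sum>b<n. (if k = 0 then 0 else c (k-1) a b) * w k $ b) = (if k = 0 then 0 else G (k-1) a)"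
      by (cases k) (simp_all add: G_def)
    have "(\<Sum>b<n. (\<Sum>l<n. c k a l * A $$ (l,b)) * w k $ b) = (\<Sum>b<n. \<Sum>l<n. c k a l * (A $$ (l,b) * w k $ b))"
      by (simp add: sum_distrib_right mult.assoc)
    also have "\<dots> = (\<Sum>l<n. \<Sum>b<n. c k a l * (A $$ (l,b) * w k $ b))" by (rule sum.swap)
    also have "\<dots> = G k a" unfolding G_def by (intro sum.cong refl) (simp add: wSuc sum_distrib_left)
    finally have h2: "(\<Sum>b<n. (\<Sum>l<n. c k a l * A $$ (l,b)) * w k $ b) = G k a" .
    show ?thesis using h h1 h2 by (simp add: left_diff_distrib sum_subtractf)
  qed
  define D where "D = Suc (degree P + (\<Sum>a<n. \<Sum>b<n. degree (N $$ (a,b))))"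
  have cD: "c D a b = 0" if "a < n" "b < n" for a b
  proof -
    have "degree (N $$ (a,b)) \<le> (\<Sum>b<n. degree (N $$ (a,b)))"
      using that by (intro member_le_sum) auto
    also have "\<dots> \<le> (\<Sum>a<n. \<Sum>b<n. degree (N $$ (a,b)))"
      using that by (intro member_le_sum[of a "{..<n}" "\<lambda>a. \<Sum>b<n. degree (N $$ (a,b))"]) auto
    finally show ?thesis unfolding c_def by (intro coeff_eq_0) (simp add: D_def)
  qed
  define F where "F k = (if k = 0 then 0 else G (k-1) i)" for k
  have "(\<Sum>d\<le>degree P. coeff P d * w d $ i) = (\<Sum>k<Suc D. coeff P k * w k $ i)"
    by (rule sum.mono_neutral_left) (auto simp: D_def coeff_eq_0)
  also have "\<dots> = (\<Sum>k<Suc D. F k - F (Suc k))"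
    using step[OF i] by (intro sum.cong refl) (simp add: F_def)
  also have "\<dots> = F 0 - F (Suc D)" by (rule sum_lessThan_telescope')
  also have "\<dots> = 0" using cD i by (simp add: F_def G_def)
  finally show ?thesis by (simp add: P_def w_def)
qed

lemma pow_add_vec:
  assumes A: "A \<in> carrier_mat n n" and x: "x \<in> carrier_vec n"
  shows "A ^\<^sub>m (i + d) *\<^sub>v x = A ^\<^sub>m d *\<^sub>v (A ^\<^sub>m i *\<^sub>v x)"
proof (induction d)
  case 0
  have "A ^\<^sub>m i *\<^sub>v x \<in> carrier_vec n" using A x by (intro mult_mat_vec_carrier[of _ n n]) auto
  then show ?case using A by (simp add: one_mult_mat_vec)
next
  case (Suc d)
  have c1: "A ^\<^sub>m i *\<^sub>v x \<in> carrier_vec n" using A x by (intro mult_mat_vec_carrier[of _ n n]) auto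
  have "A ^\<^sub>m (i + Suc d) *\<^sub>v x = (A * A ^\<^sub>m (i + d)) *\<^sub>v x" using pow_mat_Suc'[OF A, of "i+d"] by simp
  also have "\<dots> = A *\<^sub>v (A ^\<^sub>m (i + d) *\<^sub>v x)" using A x by (simp add: assoc_mult_mat_vec[of _ n n _ n])
  also have "\<dots> = A *\<^sub>v (A ^\<^sub>m d *\<^sub>v (A ^\<^sub>m i *\<^sub>v x))" using Suc by simp
  also have "\<dots> = (A * A ^\<^sub>m d) *\<^sub>v (A ^\<^sub>m i *\<^sub>v x)" using A c1 by (simp add: assoc_mult_mat_vec[of _ n n _ n])
  also have "\<dots> = A ^\<^sub>m Suc d *\<^sub>v (A ^\<^sub>m i *\<^sub>v x)" using pow_mat_Suc'[OF A, of d] by simp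
  finally show ?case .
qed

lemma mult_mat_vec_index_sum:
  fixes B :: "'a::semiring_0 mat"
  assumes B: "B \<in> carrier_mat w p" and z: "z \<in> carrier_vec p" and l: "l < w"
  shows "(B *\<^sub>v z) $ l = (\<Sum>m<p. B $$ (l,m) * z $ m)"
  using B z l by (simp add: scalar_prod_def lessThan_atLeast0)

lemma out_seq_rec_gen:
  fixes A B :: "'a::field mat"
  assumes A: "A \<in> carrier_mat p p" and B: "B \<in> carrier_mat w p" and x: "x0 \<in> carrier_vec p" and l: "l < w"
  shows "recP (char_poly A) (\<lambda>i. (B *\<^sub>v ((A ^\<^sub>m i) *\<^sub>v x0)) $ l)"
  unfolding recP_def
proof
  fix i
  define u where "u = A ^\<^sub>m i *\<^sub>v x0"
  have u: "u \<in> carrier_vec p" unfolding u_def using A x by (intro mult_mat_vec_carrier[of _ p p]) auto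
  have ud: "A ^\<^sub>m d *\<^sub>v u \<in> carrier_vec p" for d using A u by (intro mult_mat_vec_carrier[of _ p p]) auto
  have o: "(B *\<^sub>v ((A ^\<^sub>m (i + d)) *\<^sub>v x0)) $ l = (\<Sum>m<p. B $$ (l,m) * (A ^\<^sub>m d *\<^sub>v u) $ m)" for d
    unfolding pow_add_vec[OF A x] u_def[symmetric] by (rule mult_mat_vec_index_sum[OF B ud l])
  have "(\<Sum>d\<le>degree (char_poly A). coeff (char_poly A) d * (B *\<^sub>v ((A ^\<^sub>m (i + d)) *\<^sub>v x0)) $ l)
      = (\<Sum>d\<le>degree (char_poly A). \<Sum>m<p. B $$ (l,m) * (coeff (char_poly A) d * (A ^\<^sub>m d *\<^sub>v u) $ m))"
    unfolding o by (simp add: sum_distrib_left mult.left_commute)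
  also have "\<dots> = (\<Sum>m<p. B $$ (l,m) * (\<Sum>d\<le>degree (char_poly A). coeff (char_poly A) d * (A ^\<^sub>m d *\<^sub>v u) $ m))"
    by (subst sum.swap) (simp add: sum_distrib_left)
  also have "\<dots> = 0" using cayley_hamilton_vec[OF A u] by simp
  finally show "(\<Sum>d\<le>degree (char_poly A). coeff (char_poly A) d * (B *\<^sub>v ((A ^\<^sub>m (i + d)) *\<^sub>v x0)) $ l) = 0" .
qed

lemma out_seq_rec:
  assumes A: "A \<in> carrier_mat p p" and B: "B \<in> carrier_mat w p" and x: "x0 \<in> carrier_vec p" and l: "l < w"
  shows "recP (char_poly A) (\<lambda>i. out_seq A B x0 i l)"
  unfolding out_seq_def by (rule out_seq_rec_gen[OF A B x l])

lemma lattice_iff: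
  assumes v: "1 \<le> v"
  shows "in_dual_lattice P y v ws \<longleftrightarrow> P dvd (ws 0 + (\<Sum>l\<in>{2..v}. ws (l-1) * hbar P y (l-1)))"
proof -
  have split: "(\<Sum>l=1..v. f l) = f 1 + (\<Sum>l\<in>{2..v}. f l)" for f :: "nat \<Rightarrow> bit poly"
    using v by (simp add: sum.atLeast_Suc_atMost numeral_2_eq_2)
  have dg0: "(\<Sum>l=1..v. c l * dual_gen P y l 0) = c 1 * P - (\<Sum>l\<in>{2..v}. c l * hbar P y (l-1))" for c
  proof -
    have "(\<Sum>l\<in>{2..v}. c l * dual_gen P y l 0) = (\<Sum>l\<in>{2..v}. - (c l * hbar P y (l-1)))"
      by (intro sum.cong refl) (auto simp: dual_gen_def)
    then show ?thesis unfolding split by (simp add: dual_gen_def sum_negf)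
  qed
  have dgi: "(\<Sum>l=1..v. c l * dual_gen P y l idx) = c (Suc idx)" if "1 \<le> idx" "idx < v" for c idx
  proof -
    have "(\<Sum>l=1..v. c l * dual_gen P y l idx) = (\<Sum>l=1..v. if l = Suc idx then c l else 0)"
      using that by (intro sum.cong refl) (auto simp: dual_gen_def)
    also have "\<dots> = c (Suc idx)" using that by (simp add: sum.delta')
    finally show ?thesis .
  qed
  show ?thesis
  proof
    assume "in_dual_lattice P y v ws"
    then obtain c where c: "\<forall>idx<v. ws idx = (\<Sum>l=1..v. c l * dual_gen P y l idx)"
      unfolding in_dual_lattice_def by blast
    have w0: "ws 0 = c 1 * P - (\<Sum>l\<in>{2..v}. c l * hbar P y (l-1))" using c v dg0 by simp
    have wl: "(\<Sum>l\<in>{2..v}. ws (l-1) * hbar P y (l-1)) = (\<Sum>l\<in>{2..v}. c l * hbar P y (l-1))"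
    proof (intro sum.cong refl)
      fix l assume l: "l \<in> {2..v}"
      then have "ws (l-1) = c (Suc (l-1))" using c dgi[of "l-1"] by auto
      then show "ws (l-1) * hbar P y (l-1) = c l * hbar P y (l-1)" using l by simp
    qed
    show "P dvd (ws 0 + (\<Sum>l\<in>{2..v}. ws (l-1) * hbar P y (l-1)))"
      unfolding w0 wl by simp
  next
    assume "P dvd (ws 0 + (\<Sum>l\<in>{2..v}. ws (l-1) * hbar P y (l-1)))"
    then obtain q where q: "ws 0 + (\<Sum>l\<in>{2..v}. ws (l-1) * hbar P y (l-1)) = P * q" by (rule dvdE)
    define c where "c l = (if l = 1 then q else ws (l-1))" for l
    have "ws idx = (\<Sum>l=1..v. c l * dual_gen P y l idx)" if "idx < v" for idx
    proof (cases "idx = 0")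
      case True
      have "(\<Sum>l\<in>{2..v}. c l * hbar P y (l-1)) = (\<Sum>l\<in>{2..v}. ws (l-1) * hbar P y (l-1))"
        by (intro sum.cong refl) (auto simp: c_def)
      then show ?thesis unfolding True dg0 using q by (simp add: c_def algebra_simps eq_diff_eq)
    next
      case False
      then show ?thesis using that dgi[of idx c] by (simp add: c_def)
    qed
    then show "in_dual_lattice P y v ws" unfolding in_dual_lattice_def by blast
  qed
qed

lemma irreducible_degree_pos:
  fixes P :: "'a::field poly"
  assumes "irreducible P" shows "degree P > 0"
proof -
  have "P \<noteq> 0" "\<not> is_unit P" using assms by (auto simp: irreducible_def)
  then show ?thesis using is_unit_iff_degree by auto
qed

lemma inverse_mod_exists:
  fixes P h :: "'a::field poly"
  assumes irr: "irreducible P" and nd: "\<not> P dvd h"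
  shows "\<exists>q. (h * q) mod P = 1"
proof -
  define I where "I x \<longleftrightarrow> (\<exists>s t. x = s * h + t * P)" for x
  have h0: "h \<noteq> 0" using nd by auto
  have Ih: "I h" unfolding I_def by (rule exI[of _ 1], rule exI[of _ 0]) simp
  have ex: "\<exists>n. \<exists>x. I x \<and> x \<noteq> 0 \<and> degree x = n" using Ih h0 by blast
  define n where "n = (LEAST n. \<exists>x. I x \<and> x \<noteq> 0 \<and> degree x = n)"
  obtain g where g: "I g" "g \<noteq> 0" "degree g = n"
    using LeastI_ex[OF ex] unfolding n_def by blast
  have mn: "n \<le> degree x" if "I x" "x \<noteq> 0" for x
    unfolding n_def using that by (intro Least_le) blast
  have cl: "I (x mod g)" if "I x" for x
  proof -
    obtain s t where x: "x = s * h + t * P" using \<open>I x\<close> unfolding I_def by blast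
    obtain s' t' where gg: "g = s' * h + t' * P" using \<open>I g\<close> unfolding I_def by blast
    have "x mod g = x - (x div g) * g" by (simp add: minus_div_mult_eq_mod)
    also have "\<dots> = (s - (x div g) * s') * h + (t - (x div g) * t') * P"
      unfolding x gg by (simp add: algebra_simps)
    finally show ?thesis unfolding I_def by blast
  qed
  have gd: "g dvd x" if "I x" for x
  proof (rule ccontr)
    assume "\<not> g dvd x"
    then have nz: "x mod g \<noteq> 0" by (simp add: dvd_eq_mod_eq_0)
    then have "degree (x mod g) < degree g" using degree_mod_less[OF g(2)] by blast
    moreover have "n \<le> degree (x mod g)" by (rule mn[OF cl[OF that] nz])
    ultimately show False using g(3) by simp
  qed
  have IP: "I P" unfolding I_def by (rule exI[of _ 0], rule exI[of _ 1]) simp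
  have gP: "g dvd P" by (rule gd[OF IP])
  have gh: "g dvd h" by (rule gd[OF Ih])
  obtain k where Pk: "P = g * k" using gP by (rule dvdE)
  have "is_unit g \<or> is_unit k" using irreducibleD[OF irr Pk] .
  moreover have "\<not> is_unit k"
  proof
    assume ku: "is_unit k"
    have "P dvd g * k" using Pk by simp
    then have "P dvd g" using ku by (simp add: dvd_mult_unit_iff)
    then have "P dvd h" using gh by (rule dvd_trans)
    with nd show False by simp
  qed
  ultimately have gu: "is_unit g" by blast
  then obtain u where gu1: "1 = g * u" by (rule dvdE)
  obtain s t where gst: "g = s * h + t * P" using g(1) unfolding I_def by blast
  have dP: "degree (1::'a poly) < degree P" using irreducible_degree_pos[OF irr] by simp
  have "h * (s * u) = 1 - (t * u) * P" using gu1 unfolding gst by (simp add: algebra_simps)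
  then have "(h * (s * u)) mod P = (1 - (t * u) * P) mod P" by simp
  also have "\<dots> = 1 mod P" by (simp add: mod_eq_dvd_iff)
  also have "\<dots> = 1" by (rule mod_poly_less[OF dP])
  finally show ?thesis by blast
qed

lemma inv_mod_ok:
  fixes P h0 :: "bit poly"
  assumes irr: "irreducible P" and h0: "h0 \<noteq> 0" and dh: "degree h0 < degree P"
  shows "(h0 * inv_mod P h0) mod P = 1"
proof -
  have nd: "\<not> P dvd h0" using dvd_small_zero[of P h0] dh h0 by blast
  show ?thesis unfolding inv_mod_def by (rule someI_ex[OF inverse_mod_exists[OF irr nd]])
qed

lemma hbar_cong:
  assumes inv: "(h_poly P y 0 * inv_mod P (h_poly P y 0)) mod P = 1"
  shows "P dvd (h_poly P y 0 * hbar P y j - h_poly P y j)"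
proof -
  define h0 where "h0 = h_poly P y 0"
  define H where "H = inv_mod P h0"
  have "(h0 * ((H * h_poly P y j) mod P)) mod P = (h0 * H * h_poly P y j) mod P"
    by (simp add: mod_mult_right_eq mult.assoc)
  also have "\<dots> = (((h0 * H) mod P) * h_poly P y j) mod P" by (simp add: mod_mult_left_eq)
  also have "\<dots> = h_poly P y j mod P" using inv by (simp add: h0_def H_def)
  finally show ?thesis unfolding hbar_def h0_def[symmetric] H_def[symmetric] by (simp add: mod_eq_dvd_iff)
qed

lemma seq_part:
  fixes P :: "'a::field poly" and y :: "nat \<Rightarrow> nat \<Rightarrow> 'a" and wc :: "nat \<Rightarrow> nat \<Rightarrow> 'a"
  assumes dP: "degree P > 0" and recs: "\<And>l. l \<in> {1..v} \<Longrightarrow> recP P (\<lambda>i. y i (l-1))"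
  shows "(\<forall>i. (\<Sum>l=1..v. \<Sum>j<k. wc j (l-1) * y (i+j) (l-1)) = 0) \<longleftrightarrow>
         P dvd (\<Sum>l=1..v. (\<Sum>j<k. monom (wc j (l-1)) j) * hh P (\<lambda>i. y i (l-1)))"
proof -
  define S where "S = (\<Sum>l=1..v. (\<Sum>j<k. monom (wc j (l-1)) j) * hh P (\<lambda>i. y i (l-1)))"
  define T where "T i n = (\<Sum>l=1..v. \<Sum>j<k. wc j (l-1) * y (n+i+j) (l-1))" for i n
  have key: "P dvd hh P (T i) - [:0,1:]^i * S" for i
  proof -
    have a: "hh P (T i) = (\<Sum>l=1..v. hh P (\<lambda>n. \<Sum>j<k. wc j (l-1) * y (n+i+j) (l-1)))"
      unfolding T_def by (rule hh_sum)
    have b: "[:0,1:]^i * S = (\<Sum>l=1..v. [:0,1:]^i * (\<Sum>j<k. monom (wc j (l-1)) j) * hh P (\<lambda>i. y i (l-1)))"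
    proof -
      have "[:0,1:]^i * S = (\<Sum>l=1..v. [:0,1:]^i * ((\<Sum>j<k. monom (wc j (l-1)) j) * hh P (\<lambda>i. y i (l-1))))"
        unfolding S_def by (rule sum_distrib_left)
      then show ?thesis by (simp only: mult.assoc)
    qed
    show ?thesis unfolding a b sum_subtractf[symmetric]
      by (rule dvd_sum) (rule hh_combo[OF recs dP])
  qed
  have T0: "T i 0 = (\<Sum>l=1..v. \<Sum>j<k. wc j (l-1) * y (i+j) (l-1))" for i
    unfolding T_def by simp
  show ?thesis unfolding S_def[symmetric]
  proof
    assume E: "\<forall>i. (\<Sum>l=1..v. \<Sum>j<k. wc j (l-1) * y (i+j) (l-1)) = 0"
    have "T 0 = (\<lambda>n. 0)" unfolding T_def using E by simp
    then show "P dvd S" using key[of 0] by (simp add: hh_zero)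
  next
    assume PS: "P dvd S"
    show "\<forall>i. (\<Sum>l=1..v. \<Sum>j<k. wc j (l-1) * y (i+j) (l-1)) = 0"
    proof
      fix i
      have "P dvd (hh P (T i) - [:0,1:]^i * S) + [:0,1:]^i * S"
        using key[of i] PS by (intro dvd_add dvd_mult) auto
      then have "P dvd hh P (T i)" by simp
      then have z: "hh P (T i) = 0" using degree_hh[OF dP] by (rule dvd_small_zero)
      have "coeff (hh P (T i)) (degree P - 1) = (\<Sum>d\<in>{degree P..degree P}. coeff P d * T i (d - (degree P - 1) - 1))"
        using dP by (simp add: coeff_hh)
      also have "\<dots> = coeff P (degree P) * T i 0" by simp
      finally have "coeff P (degree P) * T i 0 = 0" using z by simp
      moreover have "coeff P (degree P) \<noteq> 0" using dP by auto
      ultimately have "T i 0 = 0" by simp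
      then show "(\<Sum>l=1..v. \<Sum>j<k. wc j (l-1) * y (i+j) (l-1)) = 0" using T0 by simp
    qed
  qed
qed

lemma div_part:
  fixes P h0 X S :: "'a::field poly"
  assumes irr: "irreducible P" and nd: "\<not> P dvd h0" and d: "P dvd (h0 * X - S)"
  shows "P dvd S \<longleftrightarrow> P dvd X"
proof -
  have pr: "prime_elem P" using irr by (rule field_poly_irreducible_imp_prime)
  have "P dvd S \<longleftrightarrow> P dvd h0 * X"
  proof
    assume "P dvd S" then have "P dvd (h0 * X - S) + S" using d by (rule dvd_add[rotated])
    then show "P dvd h0 * X" by simp
  next
    assume "P dvd h0 * X" then have "P dvd h0 * X - (h0 * X - S)" using d by (rule dvd_diff)
    then show "P dvd S" by simp
  qed
  also have "\<dots> \<longleftrightarrow> P dvd X" using prime_elem_dvd_mult_iff[OF pr] nd by simp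
  finally show ?thesis .
qed

lemma alg_part:
  fixes h0 a0 :: "'a::comm_ring_1"
  shows "h0 * (a0 + (\<Sum>l\<in>L. w l * hb l)) - (a0 * h0 + (\<Sum>l\<in>L. w l * h l)) = (\<Sum>l\<in>L. w l * (h0 * hb l - h l))"
  by (simp add: algebra_simps sum_distrib_left sum_subtractf)

lemma h_poly_hh: "h_poly P y j = hh P (\<lambda>i. y i j)"
  unfolding h_poly_def hh_def by simp

theorem proposition1:
  fixes p w v k :: nat
    and A B :: "bit mat" and x0 :: "bit vec"
    and wc :: "nat \<Rightarrow> nat \<Rightarrow> bit"
  assumes "p > 0" and "w > 0" and "1 \<le> v" and "v \<le> w"
    and "A \<in> carrier_mat p p" and "B \<in> carrier_mat w p"
    and "x0 \<in> carrier_vec p" and "x0 \<noteq> 0\<^sub>v p"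
    and "irreducible (char_poly A)"
    and "h_poly (char_poly A) (out_seq A B x0) 0 \<noteq> 0"
    and "k \<ge> 1"
  shows "(\<forall>i. (\<Sum>l=1..v. \<Sum>j<k. wc j (l - 1) * out_seq A B x0 (i + j) (l - 1)) = 0)
    \<longleftrightarrow> in_dual_lattice (char_poly A) (out_seq A B x0) v
          (\<lambda>idx. \<Sum>j<k. monom (wc j idx) j)"
proof -
  note A = assms(5) and B = assms(6) and x = assms(7) and irr = assms(9) and h0nz = assms(10) and v = assms(3) assms(4)
  define P where "P = char_poly A"
  define y where "y = out_seq A B x0"
  define wp where "wp idx = (\<Sum>j<k. monom (wc j idx) j)" for idx
  have dP: "degree P > 0" unfolding P_def by (rule irreducible_degree_pos[OF irr])
  have recs: "recP P (\<lambda>i. y i (l-1))" if "l \<in> {1..v}" for l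
    unfolding P_def y_def using that v by (intro out_seq_rec[OF A B x]) auto
  have seq: "(\<forall>i. (\<Sum>l=1..v. \<Sum>j<k. wc j (l-1) * y (i+j) (l-1)) = 0) \<longleftrightarrow>
         P dvd (\<Sum>l=1..v. wp (l-1) * h_poly P y (l-1))"
    unfolding wp_def h_poly_hh by (rule seq_part[OF dP]) (rule recs)
  have lat: "in_dual_lattice P y v wp \<longleftrightarrow> P dvd (wp 0 + (\<Sum>l\<in>{2..v}. wp (l-1) * hbar P y (l-1)))"
    by (rule lattice_iff[OF v(1)])
  have h0: "h_poly P y 0 \<noteq> 0" using h0nz unfolding P_def y_def .
  have dh0: "degree (h_poly P y 0) < degree P" unfolding h_poly_hh by (rule degree_hh[OF dP])
  have nd: "\<not> P dvd h_poly P y 0" using dvd_small_zero[of P "h_poly P y 0"] dh0 h0 by blast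
  have inv: "(h_poly P y 0 * inv_mod P (h_poly P y 0)) mod P = 1"
    by (rule inv_mod_ok[OF irr[folded P_def] h0 dh0])
  have split: "(\<Sum>l=1..v. f l) = f 1 + (\<Sum>l\<in>{2..v}. f l)" for f :: "nat \<Rightarrow> bit poly"
    using v(1) by (simp add: sum.atLeast_Suc_atMost numeral_2_eq_2)
  have d: "P dvd (h_poly P y 0 * (wp 0 + (\<Sum>l\<in>{2..v}. wp (l-1) * hbar P y (l-1))) - (\<Sum>l=1..v. wp (l-1) * h_poly P y (l-1)))"
  proof -
    have S_split: "(\<Sum>l=1..v. wp (l-1) * h_poly P y (l-1)) = wp 0 * h_poly P y 0 + (\<Sum>l\<in>{2..v}. wp (l-1) * h_poly P y (l-1))"
      using split[of "\<lambda>l. wp (l-1) * h_poly P y (l-1)"] by simp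
    have "P dvd (\<Sum>l\<in>{2..v}. wp (l-1) * (h_poly P y 0 * hbar P y (l-1) - h_poly P y (l-1)))"
      by (intro dvd_sum dvd_mult hbar_cong[OF inv])
    then show ?thesis by (simp only: S_split alg_part)
  qed
  show ?thesis
    using seq lat div_part[OF irr[folded P_def] nd d]
    unfolding P_def y_def wp_def by simp
qed

end
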